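(* Let $K$ be a commutative ring, $R$ a $K$-algebra, $\mathcal{G}$ a finite groupoid and $\beta=(\{E_g\}_{g\in\mathcal G},\{\beta_g\}_{g\in\mathcal G})$ a unital action of $\mathcal G$ on $R$ such that $R=\bigoplus_{e\in\mathcal G_0}E_e$ and $R$ is a $\beta$-Galois extension of $R^\beta$. Let $H$ be a subgroupoid of $\mathcal G$ and put $R_H=\bigoplus_{e\in H_0}E_e$, where $H_0=H\cap\mathcal G_0$. Then $\beta_H=(\{E_h\}_{h\in H},\{\beta_h:E_{h^{-1}}\to E_h\}_{h\in H})$ is an action of $H$ on $R_H$, and $R_H$ is a $\beta_H$-Galois extension of $(R_H)^{\beta_H}$.
   Context: All rings and algebras are associative and unital. A groupoid is a nonempty set $\mathcal G$ with a partially defined associative multiplication in which every $g$ has an inverse $g^{-1}$, a left identity $r(g)=gg^{-1}$ and a right identity $d(g)=g^{-1}g$; the product $gh$ is defined iff $d(g)=r(h)$. $\mathcal G_0$ denotes the set of identities of $\mathcal G$. A subgroupoid is a nonempty subset $H$ closed under inverses and under those products that are defined. A unital action of $\mathcal G$ on a $K$-algebra $R$ is a pair $\beta=(\{E_g\},\{\beta_g\})$ where for each $g\in\mathcal G$, $E_g=E_{r(g)}$ is an ideal of $R$ which is a unital ring with identity $1_g$ (so $1_g=1_{r(g)}$ and $1_{g^{-1}}=1_{d(g)}$), $\beta_g:E_{g^{-1}}\to E_g$ is an isomorphism of $K$-algebras, $\beta_e=\mathrm{id}_{E_e}$ for all $e\in\mathcal G_0$, and $\beta_g(\beta_h(x))=\beta_{gh}(x)$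 whenever $d(g)=r(h)$ and $x\in E_{h^{-1}}$. For a subgroupoid $H$ acting on a ring $A$ via $\beta_H$, $A^{\beta_H}=\{a\in A:\beta_h(a1_{h^{-1}})=a1_h \text{ for all } h\in H\}$; $R^\beta=R^{\beta_{\mathcal G}}$. $A$ is a $\beta_H$-Galois extension of $A^{\beta_H}$ if $H$ is finite and there exist $x_1,\dots,x_m,y_1,\dots,y_m\in A$ with $\sum_{i=1}^m x_i\beta_h(y_i1_{h^{-1}})=1_h$ if $h\in H_0$ and $=0$ if $h\in H\setminus H_0$. *)

theory Defs
  imports Main
begin

text \<open>A groupoid is given by a carrier G, a multiplication m (meaningful only when
 defined) and an inversion i.  r g = g g^-1, d g = g^-1 g; gh is defined iff d g = r h.\<close>

definition gr_r :: "('g \<Rightarrow> 'g \<Rightarrow> 'g) \<Rightarrow> ('g \<Rightarrow> 'g) \<Rightarrow> 'g \<Rightarrow> 'g" where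
  "gr_r m i g = m g (i g)"

definition gr_d :: "('g \<Rightarrow> 'g \<Rightarrow> 'g) \<Rightarrow> ('g \<Rightarrow> 'g) \<Rightarrow> 'g \<Rightarrow> 'g" where
  "gr_d m i g = m (i g) g"

definition groupoid :: "'g set \<Rightarrow> ('g \<Rightarrow> 'g \<Rightarrow> 'g) \<Rightarrow> ('g \<Rightarrow> 'g) \<Rightarrow> bool" where
  "groupoid G m i \<longleftrightarrow>
     G \<noteq> {} \<and>
     (\<forall>g\<in>G. i g \<in> G \<and> i (i g) = g) \<and>
     (\<forall>g\<in>G. \<forall>h\<in>G. gr_d m i g = gr_r m i h \<longrightarrow>
        m g h \<in> G \<and> gr_r m i (m g h) = gr_r m i g \<and> gr_d m i (m g h) = gr_d m i h) \<and>
     (\<forall>g\<in>G. \<forall>h\<in>G. \<forall>k\<in>G. gr_d m i g = gr_r m i h \<and> gr_d m i h = gr_r m i k \<longrightarrow>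
        m (m g h) k = m g (m h k)) \<and>
     (\<forall>g\<in>G. m (gr_r m i g) g = g \<and> m g (gr_d m i g) = g)"

text \<open>The set of identities G_0.  For a subgroupoid H this is H \<inter> G_0.\<close>
definition gr_ids :: "'g set \<Rightarrow> ('g \<Rightarrow> 'g \<Rightarrow> 'g) \<Rightarrow> ('g \<Rightarrow> 'g) \<Rightarrow> 'g set" where
  "gr_ids G m i = gr_r m i ` G"

definition subgroupoid :: "'g set \<Rightarrow> 'g set \<Rightarrow> ('g \<Rightarrow> 'g \<Rightarrow> 'g) \<Rightarrow> ('g \<Rightarrow> 'g) \<Rightarrow> bool" where
  "subgroupoid H G m i \<longleftrightarrow> H \<noteq> {} \<and> H \<subseteq> G \<and>
     (\<forall>h\<in>H. i h \<in> H) \<and>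
     (\<forall>g\<in>H. \<forall>h\<in>H. gr_d m i g = gr_r m i h \<longrightarrow> m g h \<in> H)"

text \<open>The K-algebra structure of the ambient ring 'r is given by a ring homomorphism
 phi from K into the centre of 'r.\<close>
definition alg_map :: "('k::comm_ring_1 \<Rightarrow> 'r::ring_1) \<Rightarrow> bool" where
  "alg_map \<phi> \<longleftrightarrow> \<phi> 1 = 1 \<and> (\<forall>a b. \<phi> (a + b) = \<phi> a + \<phi> b) \<and>
     (\<forall>a b. \<phi> (a * b) = \<phi> a * \<phi> b) \<and> (\<forall>a x. \<phi> a * x = x * \<phi> a)"

definition is_unit_of :: "'r::ring_1 set \<Rightarrow> 'r \<Rightarrow> bool" where
  "is_unit_of A u \<longleftrightarrow> u \<in> A \<and> (\<forall>x\<in>A. u * x = x \<and> x * u = x)"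

definition one_of :: "'r::ring_1 set \<Rightarrow> 'r" where
  "one_of A = (THE u. is_unit_of A u)"

text \<open>A (unital) K-subalgebra A of 'r, possibly with its own identity different from 1.\<close>
definition k_algebra_set :: "('k::comm_ring_1 \<Rightarrow> 'r::ring_1) \<Rightarrow> 'r set \<Rightarrow> bool" where
  "k_algebra_set \<phi> A \<longleftrightarrow> 0 \<in> A \<and> (\<forall>x\<in>A. \<forall>y\<in>A. x + y \<in> A \<and> x * y \<in> A) \<and>
     (\<forall>x\<in>A. - x \<in> A) \<and> (\<forall>k. \<forall>x\<in>A. \<phi> k * x \<in> A) \<and> (\<exists>u. is_unit_of A u)"

definition ideal_in :: "'r::ring_1 set \<Rightarrow> 'r set \<Rightarrow> bool" where
  "ideal_in A I \<longleftrightarrow> I \<subseteq> A \<and> 0 \<in> I \<and> (\<forall>x\<in>I. \<forall>y\<in>I. x + y \<in> I) \<and> (\<forall>x\<in>I. - x \<in> I) \<and>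
     (\<forall>a\<in>A. \<forall>x\<in>I. a * x \<in> I \<and> x * a \<in> I)"

definition k_alg_iso :: "('k::comm_ring_1 \<Rightarrow> 'r::ring_1) \<Rightarrow> ('r \<Rightarrow> 'r) \<Rightarrow> 'r set \<Rightarrow> 'r set \<Rightarrow> bool" where
  "k_alg_iso \<phi> f A B \<longleftrightarrow> bij_betw f A B \<and>
     (\<forall>x\<in>A. \<forall>y\<in>A. f (x + y) = f x + f y \<and> f (x * y) = f x * f y) \<and>
     (\<forall>k. \<forall>x\<in>A. f (\<phi> k * x) = \<phi> k * f x)"

definition unital_action ::
  "('k::comm_ring_1 \<Rightarrow> 'r::ring_1) \<Rightarrow> 'g set \<Rightarrow> ('g \<Rightarrow> 'g \<Rightarrow> 'g) \<Rightarrow> ('g \<Rightarrow> 'g) \<Rightarrow> 'r set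
    \<Rightarrow> ('g \<Rightarrow> 'r set) \<Rightarrow> ('g \<Rightarrow> 'r \<Rightarrow> 'r) \<Rightarrow> bool" where
  "unital_action \<phi> G m i A E \<beta> \<longleftrightarrow>
     k_algebra_set \<phi> A \<and>
     (\<forall>g\<in>G. ideal_in A (E g) \<and> E g = E (gr_r m i g) \<and> (\<exists>u. is_unit_of (E g) u)) \<and>
     (\<forall>g\<in>G. k_alg_iso \<phi> (\<beta> g) (E (i g)) (E g)) \<and>
     (\<forall>e\<in>gr_ids G m i. \<forall>x\<in>E e. \<beta> e x = x) \<and>
     (\<forall>g\<in>G. \<forall>h\<in>G. gr_d m i g = gr_r m i h \<longrightarrow>
        (\<forall>x\<in>E (i h). \<beta> g (\<beta> h x) = \<beta> (m g h) x))"

definition fixed_ring ::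
  "'g set \<Rightarrow> ('g \<Rightarrow> 'g) \<Rightarrow> 'r::ring_1 set \<Rightarrow> ('g \<Rightarrow> 'r set) \<Rightarrow> ('g \<Rightarrow> 'r \<Rightarrow> 'r) \<Rightarrow> 'r set" where
  "fixed_ring H i A E \<beta> =
     {a \<in> A. \<forall>h\<in>H. \<beta> h (a * one_of (E (i h))) = a * one_of (E h)}"

definition galois_ext ::
  "'g set \<Rightarrow> ('g \<Rightarrow> 'g \<Rightarrow> 'g) \<Rightarrow> ('g \<Rightarrow> 'g) \<Rightarrow> 'r::ring_1 set \<Rightarrow> 'r set
    \<Rightarrow> ('g \<Rightarrow> 'r set) \<Rightarrow> ('g \<Rightarrow> 'r \<Rightarrow> 'r) \<Rightarrow> bool" where
  "galois_ext H m i A B E \<beta> \<longleftrightarrow>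
     B = fixed_ring H i A E \<beta> \<and> finite H \<and>
     (\<exists>(n::nat) x y. (\<forall>j<n. x j \<in> A \<and> y j \<in> A) \<and>
        (\<forall>h\<in>H. (\<Sum>j<n. x j * \<beta> h (y j * one_of (E (i h)))) =
                 (if h \<in> gr_ids H m i then one_of (E h) else 0)))"

definition internal_direct_sum :: "'r::ring_1 set \<Rightarrow> ('g \<Rightarrow> 'r set) \<Rightarrow> 'g set \<Rightarrow> bool" where
  "internal_direct_sum A E S \<longleftrightarrow> finite S \<and> (\<forall>e\<in>S. E e \<subseteq> A) \<and>
     (\<forall>x\<in>A. \<exists>!f. (\<forall>e\<in>S. f e \<in> E e) \<and> (\<forall>e. e \<notin> S \<longrightarrow> f e = 0) \<and> x = (\<Sum>e\<in>S. f e))"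

text \<open>The sum of the ideals E e, e in S (direct inside R under the hypotheses).\<close>
definition sum_of_ideals :: "('g \<Rightarrow> 'r::ring_1 set) \<Rightarrow> 'g set \<Rightarrow> 'r set" where
  "sum_of_ideals E S = {x. \<exists>f. (\<forall>e\<in>S. f e \<in> E e) \<and> x = (\<Sum>e\<in>S. f e)}"

end

theory Submission
  imports Defs
begin

lemma gr_r_in:
  assumes "groupoid G m i" "g \<in> G" shows "gr_r m i g \<in> G"
proof -
  have "i g \<in> G" "i (i g) = g" using assms unfolding groupoid_def by auto
  hence "gr_d m i g = gr_r m i (i g)" unfolding gr_d_def gr_r_def by simp
  thus ?thesis using assms \<open>i g \<in> G\<close> unfolding groupoid_def gr_r_def[of m i g] by blast
qed

lemma gr_r_r:
  assumes "groupoid G m i" "g \<in> G" shows "gr_r m i (gr_r m i g) = gr_r m i g"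
proof -
  have "i g \<in> G" "i (i g) = g" using assms unfolding groupoid_def by auto
  hence "gr_d m i g = gr_r m i (i g)" unfolding gr_d_def gr_r_def by simp
  hence "gr_r m i (m g (i g)) = gr_r m i g" using assms \<open>i g \<in> G\<close> unfolding groupoid_def by blast
  thus ?thesis by (simp add: gr_r_def[of m i g])
qed

lemma unit_unique: "is_unit_of A u \<Longrightarrow> is_unit_of A v \<Longrightarrow> u = v"
  unfolding is_unit_of_def by metis

lemma one_of_unit: "is_unit_of A u \<Longrightarrow> one_of A = u"
  unfolding one_of_def using unit_unique by blast

lemma disj:
  assumes "internal_direct_sum (UNIV::'r::ring_1 set) E S" "e \<in> S" "e' \<in> S" "e \<noteq> e'"
    "\<forall>a\<in>S. (0::'r) \<in> E a" "z \<in> E e" "z \<in> E e'"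
  shows "z = 0"
proof -
  define f1 where "f1 = (\<lambda>a. if a = e then z else (0::'r))"
  define f2 where "f2 = (\<lambda>a. if a = e' then z else (0::'r))"
  have fin: "finite S" using assms(1) unfolding internal_direct_sum_def by auto
  have u: "\<exists>!f. (\<forall>a\<in>S. f a \<in> E a) \<and> (\<forall>a. a \<notin> S \<longrightarrow> f a = 0) \<and> z = (\<Sum>a\<in>S. f a)"
    using assms(1) unfolding internal_direct_sum_def by auto
  have p1: "(\<forall>a\<in>S. f1 a \<in> E a) \<and> (\<forall>a. a \<notin> S \<longrightarrow> f1 a = 0) \<and> z = (\<Sum>a\<in>S. f1 a)"
    using assms fin unfolding f1_def by (auto simp: sum.delta)
  have p2: "(\<forall>a\<in>S. f2 a \<in> E a) \<and> (\<forall>a. a \<notin> S \<longrightarrow> f2 a = 0) \<and> z = (\<Sum>a\<in>S. f2 a)"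
    using assms fin unfolding f2_def by (auto simp: sum.delta)
  have "f1 = f2" using u p1 p2 by blast
  hence "f1 e = f2 e" by simp
  thus ?thesis using assms(4) unfolding f1_def f2_def by simp
qed

lemma key:
  fixes E :: "'g \<Rightarrow> 'r::ring_1 set"
  assumes fin: "finite T" and TS: "T \<subseteq> S"
    and id: "\<forall>e\<in>S. ideal_in UNIV (E e) \<and> is_unit_of (E e) (U e)"
    and dj: "\<forall>e\<in>S. \<forall>e'\<in>S. e \<noteq> e' \<longrightarrow> (\<forall>z. z \<in> E e \<and> z \<in> E e' \<longrightarrow> z = 0)"
    and e: "e \<in> T" and x: "x \<in> E e"
  shows "(\<Sum>a\<in>T. U a) * x = x \<and> x * (\<Sum>a\<in>T. U a) = x"
proof -
  have eS: "e \<in> S" using e TS by auto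
  have z1: "\<forall>a\<in>T-{e}. U a * x = 0"
  proof
    fix a assume a: "a \<in> T - {e}"
    have "U a * x \<in> E a" using id a TS x unfolding ideal_in_def is_unit_of_def by blast
    moreover have "U a * x \<in> E e" using id a TS x eS unfolding ideal_in_def is_unit_of_def by blast
    ultimately show "U a * x = 0" using dj a TS eS by blast
  qed
  have z2: "\<forall>a\<in>T-{e}. x * U a = 0"
  proof
    fix a assume a: "a \<in> T - {e}"
    have "x * U a \<in> E a" using id a TS x unfolding ideal_in_def is_unit_of_def by blast
    moreover have "x * U a \<in> E e" using id a TS x eS unfolding ideal_in_def is_unit_of_def by blast
    ultimately show "x * U a = 0" using dj a TS eS by blast
  qed
  have "(\<Sum>a\<in>T. U a) * x = U e * x + (\<Sum>a\<in>T-{e}. U a * x)"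
    by (simp add: sum.remove[OF fin e] distrib_right sum_distrib_right)
  also have "\<dots> = x" using z1 id eS x unfolding is_unit_of_def by simp
  finally have 1: "(\<Sum>a\<in>T. U a) * x = x" .
  have "x * (\<Sum>a\<in>T. U a) = x * U e + (\<Sum>a\<in>T-{e}. x * U a)"
    by (simp add: sum.remove[OF fin e] distrib_left sum_distrib_left)
  also have "\<dots> = x" using z2 id eS x unfolding is_unit_of_def by simp
  finally show ?thesis using 1 by simp
qed

lemma key_sum:
  fixes E :: "'g \<Rightarrow> 'r::ring_1 set"
  assumes fin: "finite T" and TS: "T \<subseteq> S"
    and id: "\<forall>e\<in>S. ideal_in UNIV (E e) \<and> is_unit_of (E e) (U e)"
    and dj: "\<forall>e\<in>S. \<forall>e'\<in>S. e \<noteq> e' \<longrightarrow> (\<forall>z. z \<in> E e \<and> z \<in> E e' \<longrightarrow> z = 0)"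
    and x: "x \<in> sum_of_ideals E T"
  shows "(\<Sum>a\<in>T. U a) * x = x \<and> x * (\<Sum>a\<in>T. U a) = x"
proof -
  obtain f where f: "\<forall>e\<in>T. f e \<in> E e" "x = (\<Sum>e\<in>T. f e)"
    using x unfolding sum_of_ideals_def by auto
  have k: "\<forall>e\<in>T. (\<Sum>a\<in>T. U a) * f e = f e \<and> f e * (\<Sum>a\<in>T. U a) = f e"
    using key[OF fin TS id dj] f(1) by blast
  have "(\<Sum>a\<in>T. U a) * x = (\<Sum>e\<in>T. (\<Sum>a\<in>T. U a) * f e)" unfolding f(2) by (rule sum_distrib_left)
  also have "\<dots> = x" unfolding f(2) using k by (intro sum.cong) auto
  finally have 1: "(\<Sum>a\<in>T. U a) * x = x" .
  have "x * (\<Sum>a\<in>T. U a) = (\<Sum>e\<in>T. f e * (\<Sum>a\<in>T. U a))" unfolding f(2) by (rule sum_distrib_right)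
  also have "\<dots> = x" unfolding f(2) using k by (intro sum.cong) auto
  finally show ?thesis using 1 by simp
qed

theorem mainTheorem1:
  fixes \<phi> :: "'k::comm_ring_1 \<Rightarrow> 'r::ring_1"
    and G H :: "'g set" and m :: "'g \<Rightarrow> 'g \<Rightarrow> 'g" and i :: "'g \<Rightarrow> 'g"
    and E :: "'g \<Rightarrow> 'r set" and \<beta> :: "'g \<Rightarrow> 'r \<Rightarrow> 'r"
  assumes "alg_map \<phi>"
    and "groupoid G m i" and "finite G"
    and "unital_action \<phi> G m i UNIV E \<beta>"
    and "internal_direct_sum UNIV E (gr_ids G m i)"
    and "galois_ext G m i UNIV (fixed_ring G i UNIV E \<beta>) E \<beta>"
    and "subgroupoid H G m i"
  shows "unital_action \<phi> H m i (sum_of_ideals E (gr_ids H m i)) E \<beta>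
    \<and> galois_ext H m i (sum_of_ideals E (gr_ids H m i))
        (fixed_ring H i (sum_of_ideals E (gr_ids H m i)) E \<beta>) E \<beta>"
proof -
  define S where "S = gr_ids G m i"
  define T where "T = gr_ids H m i"
  define U where "U = (\<lambda>e. one_of (E e))"
  define RH where "RH = sum_of_ideals E T"
  define u where "u = (\<Sum>a\<in>T. U a)"
  have HG: "H \<subseteq> G" and Hi: "\<forall>h\<in>H. i h \<in> H" using assms(7) unfolding subgroupoid_def by auto
  have finH: "finite H" using HG assms(3) finite_subset by blast
  have TS: "T \<subseteq> S" unfolding T_def S_def gr_ids_def using HG by auto
  have finT: "finite T" unfolding T_def gr_ids_def using finH by simp
  have ua: "\<forall>g\<in>G. ideal_in UNIV (E g) \<and> E g = E (gr_r m i g) \<and> (\<exists>u. is_unit_of (E g) u)"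
    using assms(4) unfolding unital_action_def by blast
  have iso: "\<forall>g\<in>G. k_alg_iso \<phi> (\<beta> g) (E (i g)) (E g)"
    using assms(4) unfolding unital_action_def by blast
  have idG: "\<forall>e\<in>S. \<forall>x\<in>E e. \<beta> e x = x"
    using assms(4) unfolding unital_action_def S_def by blast
  have compG: "\<forall>g\<in>G. \<forall>h\<in>G. gr_d m i g = gr_r m i h \<longrightarrow>
        (\<forall>x\<in>E (i h). \<beta> g (\<beta> h x) = \<beta> (m g h) x)"
    using assms(4) unfolding unital_action_def by blast
  have idS: "\<forall>e\<in>S. ideal_in UNIV (E e) \<and> is_unit_of (E e) (U e)"
  proof
    fix e assume "e \<in> S"
    then obtain g where g: "g \<in> G" "e = gr_r m i g" unfolding S_def gr_ids_def by auto
    then obtain v where "is_unit_of (E g) v" using ua by blast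
    thus "ideal_in UNIV (E e) \<and> is_unit_of (E e) (U e)"
      using ua g one_of_unit unfolding U_def by metis
  qed
  have zS: "\<forall>a\<in>S. (0::'r) \<in> E a" using idS unfolding ideal_in_def by blast
  have dj: "\<forall>e\<in>S. \<forall>e'\<in>S. e \<noteq> e' \<longrightarrow> (\<forall>z. z \<in> E e \<and> z \<in> E e' \<longrightarrow> z = 0)"
    using disj[OF assms(5)[folded S_def] _ _ _ zS] by blast
  have ks: "\<And>x. x \<in> RH \<Longrightarrow> u * x = x \<and> x * u = x"
    using key_sum[OF finT TS idS dj] unfolding RH_def u_def by blast
  have EsubRH: "\<And>e x. e \<in> T \<Longrightarrow> x \<in> E e \<Longrightarrow> x \<in> RH"
  proof -
    fix e x assume e: "e \<in> T" and x: "x \<in> E e"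
    define f where "f = (\<lambda>a. if a = e then x else (0::'r))"
    have "(\<forall>a\<in>T. f a \<in> E a) \<and> x = (\<Sum>a\<in>T. f a)"
      using e x zS TS finT unfolding f_def by (auto simp: sum.delta)
    thus "x \<in> RH" unfolding RH_def sum_of_ideals_def by blast
  qed
  have idealE: "\<And>e. e \<in> S \<Longrightarrow> (\<forall>a x. x \<in> E e \<longrightarrow> a * x \<in> E e \<and> x * a \<in> E e)"
    using idS unfolding ideal_in_def by blast
  have rH: "\<And>h. h \<in> H \<Longrightarrow> gr_r m i h \<in> T" unfolding T_def gr_ids_def by auto
  have EHsub: "\<And>h. h \<in> H \<Longrightarrow> E h = E (gr_r m i h)" using ua HG by blast
  have Eh_RH: "\<And>h x. h \<in> H \<Longrightarrow> x \<in> E h \<Longrightarrow> x \<in> RH" using EsubRH rH EHsub by metis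
  have rightmul: "\<And>x. x * u \<in> RH"
  proof -
    fix x
    have "(\<forall>a\<in>T. x * U a \<in> E a) \<and> x * u = (\<Sum>a\<in>T. x * U a)"
      using idS TS unfolding u_def is_unit_of_def ideal_in_def by (auto simp: sum_distrib_left)
    thus "x * u \<in> RH" unfolding RH_def sum_of_ideals_def by (intro CollectI exI[of _ "\<lambda>a. x * U a"]) simp
  qed
  have kalg: "k_algebra_set \<phi> RH"
    unfolding k_algebra_set_def
  proof (intro conjI ballI allI)
    show "0 \<in> RH" unfolding RH_def sum_of_ideals_def using zS TS
      by (auto intro!: exI[of _ "\<lambda>_. 0"])
  next
    fix x y assume x: "x \<in> RH" and y: "y \<in> RH"
    obtain f where f: "\<forall>e\<in>T. f e \<in> E e" "x = (\<Sum>e\<in>T. f e)"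
      using x unfolding RH_def sum_of_ideals_def by auto
    obtain g where g: "\<forall>e\<in>T. g e \<in> E e" "y = (\<Sum>e\<in>T. g e)"
      using y unfolding RH_def sum_of_ideals_def by auto
    have "\<forall>e\<in>T. f e + g e \<in> E e" using f g idS TS unfolding ideal_in_def by blast
    moreover have "x + y = (\<Sum>e\<in>T. f e + g e)" using f g by (simp add: sum.distrib)
    ultimately show "x + y \<in> RH" unfolding RH_def sum_of_ideals_def by (intro CollectI exI[of _ "\<lambda>e. f e + g e"]) simp
    have "\<forall>e\<in>T. f e * y \<in> E e" using f idealE TS by blast
    moreover have "x * y = (\<Sum>e\<in>T. f e * y)" using f by (simp add: sum_distrib_right)
    ultimately show "x * y \<in> RH" unfolding RH_def sum_of_ideals_def by (intro CollectI exI[of _ "\<lambda>e. f e * y"]) simp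
  next
    fix x assume x: "x \<in> RH"
    obtain f where f: "\<forall>e\<in>T. f e \<in> E e" "x = (\<Sum>e\<in>T. f e)"
      using x unfolding RH_def sum_of_ideals_def by auto
    have "\<forall>e\<in>T. - f e \<in> E e" using f idS TS unfolding ideal_in_def by blast
    moreover have "- x = (\<Sum>e\<in>T. - f e)" using f by (simp add: sum_negf)
    ultimately show "- x \<in> RH" unfolding RH_def sum_of_ideals_def by (intro CollectI exI[of _ "\<lambda>e. - f e"]) simp
  next
    fix k x assume x: "x \<in> RH"
    obtain f where f: "\<forall>e\<in>T. f e \<in> E e" "x = (\<Sum>e\<in>T. f e)"
      using x unfolding RH_def sum_of_ideals_def by auto
    have "\<forall>e\<in>T. \<phi> k * f e \<in> E e" using f idealE TS by blast
    moreover have "\<phi> k * x = (\<Sum>e\<in>T. \<phi> k * f e)" using f by (simp add: sum_distrib_left)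
    ultimately show "\<phi> k * x \<in> RH" unfolding RH_def sum_of_ideals_def by (intro CollectI exI[of _ "\<lambda>e. \<phi> k * f e"]) simp
  next
    have "u \<in> RH" unfolding RH_def sum_of_ideals_def u_def
      using idS TS unfolding is_unit_of_def by blast
    thus "\<exists>v. is_unit_of RH v" using ks unfolding is_unit_of_def by blast
  qed
  have p1: "\<forall>g\<in>H. ideal_in RH (E g) \<and> E g = E (gr_r m i g) \<and> (\<exists>u. is_unit_of (E g) u)"
  proof
    fix g assume g: "g \<in> H"
    have gG: "g \<in> G" using g HG by auto
    have "E g \<subseteq> RH" using Eh_RH g by blast
    moreover have "ideal_in UNIV (E g)" using ua gG by blast
    ultimately have "ideal_in RH (E g)" unfolding ideal_in_def by blast
    thus "ideal_in RH (E g) \<and> E g = E (gr_r m i g) \<and> (\<exists>u. is_unit_of (E g) u)"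
      using ua gG by blast
  qed
  have p2: "\<forall>g\<in>H. k_alg_iso \<phi> (\<beta> g) (E (i g)) (E g)" using iso HG by blast
  have p3: "\<forall>e\<in>gr_ids H m i. \<forall>x\<in>E e. \<beta> e x = x" using idG TS unfolding T_def by blast
  have p4: "\<forall>g\<in>H. \<forall>h\<in>H. gr_d m i g = gr_r m i h \<longrightarrow>
        (\<forall>x\<in>E (i h). \<beta> g (\<beta> h x) = \<beta> (m g h) x)" using compG HG by blast
  have part1: "unital_action \<phi> H m i RH E \<beta>"
    unfolding unital_action_def using kalg p1 p2 p3 p4 by blast
  obtain n :: nat and x y where xy: "\<forall>h\<in>G. (\<Sum>j<n. x j * \<beta> h (y j * one_of (E (i h)))) =
                 (if h \<in> S then one_of (E h) else 0)"
  proof -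
    have "\<exists>(n::nat) x y. (\<forall>j<n. x j \<in> (UNIV::'r set) \<and> y j \<in> (UNIV::'r set)) \<and>
        (\<forall>h\<in>G. (\<Sum>j<n. x j * \<beta> h (y j * one_of (E (i h)))) =
                 (if h \<in> gr_ids G m i then one_of (E h) else 0))"
      using assms(6) unfolding galois_ext_def by blast
    thus ?thesis using that unfolding S_def by blast
  qed
  have gal: "\<forall>h\<in>H. (\<Sum>j<n. (x j * u) * \<beta> h ((y j * u) * one_of (E (i h)))) =
                 (if h \<in> T then one_of (E h) else 0)"
  proof
    fix h assume h: "h \<in> H"
    have hG: "h \<in> G" using h HG by auto
    have ihH: "i h \<in> H" using Hi h by blast
    have ihG: "i h \<in> G" using ihH HG by auto
    have ihS: "gr_r m i (i h) \<in> S" unfolding S_def gr_ids_def using ihG by auto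
    have unE: "one_of (E (i h)) \<in> E (i h)"
      using idS ihS ua ihG unfolding U_def is_unit_of_def by metis
    have u1: "u * one_of (E (i h)) = one_of (E (i h))" using ks Eh_RH[OF ihH unE] by blast
    have bij: "bij_betw (\<beta> h) (E (i h)) (E h)" using iso hG unfolding k_alg_iso_def by blast
    have trm: "(x j * u) * \<beta> h ((y j * u) * one_of (E (i h))) =
                x j * \<beta> h (y j * one_of (E (i h)))" for j
    proof -
      have "(y j * u) * one_of (E (i h)) = y j * one_of (E (i h))"
        by (simp add: mult.assoc u1)
      moreover have "y j * one_of (E (i h)) \<in> E (i h)"
      proof -
        have eq: "E (i h) = E (gr_r m i (i h))" using ua ihG by blast
        show ?thesis using idealE[OF ihS] unE unfolding eq[symmetric] by blast
      qed
      hence "\<beta> h (y j * one_of (E (i h))) \<in> E h" by (rule bij_betw_apply[OF bij])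
      hence "u * \<beta> h (y j * one_of (E (i h))) = \<beta> h (y j * one_of (E (i h)))"
        by (rule conjunct1[OF ks[OF Eh_RH[OF h]]])
      ultimately show ?thesis by (simp add: mult.assoc)
    qed
    have iff: "h \<in> T \<longleftrightarrow> h \<in> S"
    proof
      assume "h \<in> T" thus "h \<in> S" using TS by blast
    next
      assume "h \<in> S"
      then obtain g where g: "g \<in> G" "h = gr_r m i g" unfolding S_def gr_ids_def by auto
      hence "gr_r m i h = h" using gr_r_r[OF assms(2)] by simp
      thus "h \<in> T" using rH[OF h] by simp
    qed
    show "(\<Sum>j<n. (x j * u) * \<beta> h ((y j * u) * one_of (E (i h)))) =
                 (if h \<in> T then one_of (E h) else 0)"
      using xy hG iff trm by simp
  qed
  have part2: "galois_ext H m i RH (fixed_ring H i RH E \<beta>) E \<beta>"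
    unfolding galois_ext_def
    apply (intro conjI refl finH)
    apply (rule exI[of _ n], rule exI[of _ "\<lambda>j. x j * u"], rule exI[of _ "\<lambda>j. y j * u"])
    using rightmul gal unfolding T_def by blast
  show ?thesis using part1 part2 unfolding RH_def T_def by blast
qed

end
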